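(* Let $a>0$, $b>0$, and let $\chi_1,\chi_2\ge0$, $\lambda_1,\lambda_2>0$, $\mu_1,\mu_2>0$ be arbitrary. Then the system $$\begin{cases}\partial_t u=\partial_{xx}u+\partial_x\big(u\,\partial_x(\chi_2 v_2-\chi_1 v_1)\big)+u(a-bu), & x\in\mathbb{R},\\ 0=\partial_{xx}v_1-\lambda_1 v_1+\mu_1 u, & x\in\mathbb{R},\\ 0=\partial_{xx}v_2-\lambda_2 v_2+\mu_2 u, & x\in\mathbb{R}\end{cases}$$ has no traveling wave solution $(u,v_1,v_2)=(U(x-ct),V_1(x-ct),V_2(x-ct))$ with $(U,V_1,V_2)(-\infty)=(\frac ab,\frac{a\mu_1}{b\lambda_1},\frac{a\mu_2}{b\lambda_2})$, $(U,V_1,V_2)(\infty)=(0,0,0)$ and $c<2\sqrt a$.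
   Context: A traveling wave solution here is a nonnegative classical solution of the stated form with the stated limits as the argument tends to $\mp\infty$. *)

theory Defs
  imports "HOL-Analysis.Analysis"
begin

definition C2_real :: "(real \<Rightarrow> real) \<Rightarrow> bool" where
  "C2_real f \<longleftrightarrow> (\<exists>f' f''. (\<forall>x. (f has_real_derivative f' x) (at x)) \<and>
      (\<forall>x. (f' has_real_derivative f'' x) (at x)) \<and> continuous_on UNIV f'')"

definition traveling_wave ::
  "real \<Rightarrow> real \<Rightarrow> real \<Rightarrow> real \<Rightarrow> real \<Rightarrow> real \<Rightarrow> real \<Rightarrow> real \<Rightarrow> real \<Rightarrow>
   (real \<Rightarrow> real) \<Rightarrow> (real \<Rightarrow> real) \<Rightarrow> (real \<Rightarrow> real) \<Rightarrow> bool" where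
  "traveling_wave a b chi1 chi2 lam1 lam2 mu1 mu2 c U V1 V2 \<longleftrightarrow>
     (let u = (\<lambda>t x. U (x - c * t)); v1 = (\<lambda>t x. V1 (x - c * t));
          v2 = (\<lambda>t x. V2 (x - c * t)) in
     (\<forall>z. U z \<ge> 0 \<and> V1 z \<ge> 0 \<and> V2 z \<ge> 0) \<and>
     C2_real U \<and> C2_real V1 \<and> C2_real V2 \<and>
     (\<forall>t x. deriv (\<lambda>s. u s x) t =
          deriv (deriv (u t)) x
          + deriv (\<lambda>y. u t y * deriv (\<lambda>y'. chi2 * v2 t y' - chi1 * v1 t y') y) x
          + u t x * (a - b * u t x)) \<and>
     (\<forall>t x. 0 = deriv (deriv (v1 t)) x - lam1 * v1 t x + mu1 * u t x) \<and>
     (\<forall>t x. 0 = deriv (deriv (v2 t)) x - lam2 * v2 t x + mu2 * u t x) \<and>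
     (U \<longlongrightarrow> a / b) at_bot \<and> (V1 \<longlongrightarrow> a * mu1 / (b * lam1)) at_bot \<and>
     (V2 \<longlongrightarrow> a * mu2 / (b * lam2)) at_bot \<and>
     (U \<longlongrightarrow> 0) at_top \<and> (V1 \<longlongrightarrow> 0) at_top \<and> (V2 \<longlongrightarrow> 0) at_top)"

end

theory Submission
  imports Defs
begin

lemma deriv_to_zero:
  fixes f f' f'' :: "real \<Rightarrow> real"
  assumes d1: "\<And>x. (f has_real_derivative f' x) (at x)"
    and d2: "\<And>x. (f' has_real_derivative f'' x) (at x)"
    and l0: "(f \<longlongrightarrow> 0) at_top" and l2: "(f'' \<longlongrightarrow> 0) at_top"
  shows "(f' \<longlongrightarrow> 0) at_top"
proof (rule tendsto_sandwich[of "\<lambda>x. - \<bar>f' x\<bar>" _ _ "\<lambda>x. \<bar>f' x\<bar>"])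
  have "\<forall>\<^sub>F x in at_top. \<bar>f' x\<bar> < e" if e: "e > 0" for e
  proof -
    have "\<forall>\<^sub>F x in at_top. \<bar>f x\<bar> < e/4"
      using l0[unfolded tendsto_iff dist_real_def, rule_format, of "e/4"] e by simp
    moreover have "\<forall>\<^sub>F x in at_top. \<bar>f'' x\<bar> < e/2"
      using l2[unfolded tendsto_iff dist_real_def, rule_format, of "e/2"] e by simp
    ultimately have "\<forall>\<^sub>F x in at_top. \<bar>f x\<bar> < e/4 \<and> \<bar>f'' x\<bar> < e/2"
      by (rule eventually_conj)
    then obtain N where N: "\<And>x. x \<ge> N \<Longrightarrow> \<bar>f x\<bar> < e/4 \<and> \<bar>f'' x\<bar> < e/2"
      by (auto simp: eventually_at_top_linorder)
    show ?thesis unfolding eventually_at_top_linorder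
    proof (intro exI allI impI)
      fix x assume x: "x \<ge> N"
      obtain y where y: "x < y" "y < x + 1" "f (x+1) - f x = (x + 1 - x) * f' y"
        using MVT2[of x "x+1" f f'] d1 by auto
      obtain w where w: "x < w" "w < y" "f' y - f' x = (y - x) * f'' w"
        using MVT2[of x y f' f''] d2 y by auto
      have "\<bar>f' y\<bar> < e/2" using N[of x] N[of "x+1"] x y(3) by auto
      moreover have "\<bar>(y - x) * f'' w\<bar> \<le> e/2"
      proof -
        have "\<bar>(y - x) * f'' w\<bar> = (y-x) * \<bar>f'' w\<bar>" using y by (simp add: abs_mult)
        also have "\<dots> \<le> 1 * (e/2)" using N[of w] x w y
          by (intro mult_mono) auto
        finally show ?thesis by simp
      qed
      ultimately show "\<bar>f' x\<bar> < e" using w(3) by linarith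
    qed
  qed
  then have "((\<lambda>x. \<bar>f' x\<bar>) \<longlongrightarrow> 0) at_top"
    by (auto simp: tendsto_iff dist_real_def)
  then show "((\<lambda>x. \<bar>f' x\<bar>) \<longlongrightarrow> 0) at_top" "((\<lambda>x. - \<bar>f' x\<bar>) \<longlongrightarrow> 0) at_top"
    using tendsto_minus by force+
qed (auto intro!: always_eventually)


lemma abs2ab: "\<bar>2*a*b\<bar> \<le> a^2 + (b::real)^2"
proof -
  have "0 \<le> (a-b)^2" "0 \<le> (a+b)^2" by auto
  moreover have "(a-b)^2 = a^2 - 2*a*b + b^2" "(a+b)^2 = a^2 + 2*a*b + b^2" by algebra+
  ultimately show ?thesis by (simp add: abs_le_iff)
qed

lemma zero_backward:
  fixes U U1 U2 p q :: "real \<Rightarrow> real"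
  assumes d1: "\<And>x. (U has_real_derivative U1 x) (at x)"
    and d2: "\<And>x. (U1 has_real_derivative U2 x) (at x)"
    and ode: "\<And>x. U2 x = - p x * U1 x - q x * U x"
    and cp: "continuous_on UNIV p" and cq: "continuous_on UNIV q"
    and nn: "\<And>x. U x \<ge> 0" and z0: "U z0 = 0" and y: "y < z0"
  shows "U y = 0"
proof -
  have u1z: "U1 z0 = 0"
    by (rule DERIV_local_min[OF d1, of 1]) (use nn z0 in auto)
  have cpt: "compact ((\<lambda>x. \<bar>p x\<bar> + \<bar>q x\<bar>) ` {y..z0})"
    by (intro compact_continuous_image continuous_intros continuous_on_subset[OF cp]
        continuous_on_subset[OF cq]) auto
  then obtain M0 where M0: "\<And>x. x \<in> {y..z0} \<Longrightarrow> \<bar>\<bar>p x\<bar> + \<bar>q x\<bar>\<bar> \<le> M0"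
  proof -
    from compact_imp_bounded[OF cpt] obtain B where "\<forall>v\<in>(\<lambda>x. \<bar>p x\<bar> + \<bar>q x\<bar>) ` {y..z0}. \<bar>v\<bar> \<le> B"
      unfolding bounded_real by blast
    then show ?thesis using that by blast
  qed
  define M where "M = max M0 0"
  have M: "\<bar>p x\<bar> \<le> M" "\<bar>q x\<bar> \<le> M" if "x \<in> {y..z0}" for x
    using M0[OF that] unfolding M_def by auto
  have M0': "M \<ge> 0" unfolding M_def by auto
  define K where "K = 1 + 3 * M"
  define E where "E x = (U x)^2 + (U1 x)^2" for x
  define G where "G x = E x * exp (K * x)" for x
  define G' where "G' x = (2 * U x * U1 x + 2 * U1 x * U2 x) * exp (K * x) + E x * (exp (K * x) * K)" for x
  have dG: "(G has_real_derivative G' x) (at x)" for x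
    unfolding G_def G'_def E_def
    by (auto intro!: derivative_eq_intros d1 d2 simp: algebra_simps)
  have G'nn: "G' x \<ge> 0" if x: "x \<in> {y..z0}" for x
  proof -
    have a1: "2 * U x * U1 x \<ge> - ((U x)^2 + (U1 x)^2)"
      using abs2ab[of "U x" "U1 x"] by linarith
    have a2: "\<bar>2 * U x * U1 x\<bar> \<le> (U x)^2 + (U1 x)^2"
      by (rule abs2ab)
    have a3: "- 2 * p x * (U1 x)^2 \<ge> - 2 * M * (U1 x)^2"
      using M(1)[OF x] by (intro mult_right_mono) auto
    have a4: "- q x * (2 * U x * U1 x) \<ge> - M * ((U x)^2 + (U1 x)^2)"
    proof -
      have "\<bar>q x * (2 * U x * U1 x)\<bar> \<le> M * ((U x)^2 + (U1 x)^2)"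
        unfolding abs_mult[of "q x"] using M(2)[OF x] a2 by (intro mult_mono) auto
      then show ?thesis by linarith
    qed
    have "2 * U x * U1 x + 2 * U1 x * U2 x = 2 * U x * U1 x - 2 * p x * (U1 x)^2 - q x * (2 * U x * U1 x)"
      by (simp add: ode power2_eq_square algebra_simps)
    also have "\<dots> \<ge> - K * E x"
    proof -
      have e: "K * E x = ((U x)^2 + (U1 x)^2) + 2*M*(U1 x)^2 + M*((U x)^2 + (U1 x)^2) + 2*M*(U x)^2"
        by (simp add: K_def E_def algebra_simps)
      have "0 \<le> M*(U x)^2" using M0' by simp
      then show ?thesis using a1 a3 a4 e by linarith
    qed
    finally have "2 * U x * U1 x + 2 * U1 x * U2 x + K * E x \<ge> 0" by linarith
    then have "(2 * U x * U1 x + 2 * U1 x * U2 x + K * E x) * exp (K*x) \<ge> 0" by simp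
    then show ?thesis unfolding G'_def by (simp add: algebra_simps)
  qed
  obtain w where w: "y < w" "w < z0" "G z0 - G y = (z0 - y) * G' w"
    using MVT2[OF y, of G G'] dG by auto
  have "G z0 = 0" unfolding G_def E_def using z0 u1z by simp
  moreover have "(z0 - y) * G' w \<ge> 0" using G'nn[of w] w y by simp
  ultimately have "G y \<le> 0" using w by linarith
  then have "E y \<le> 0" unfolding G_def by (simp add: mult_le_0_iff)
  then show ?thesis unfolding E_def
    by (smt (verit) zero_le_power2 zero_eq_power2)
qed


lemma quad_nonneg:
  fixes A m B R :: real
  assumes "A > 0" "m^2 \<le> 4*A*B"
  shows "A*R^2 + m*R + B \<ge> 0"
proof -
  have "4*A*(A*R^2+m*R+B) = (2*A*R+m)^2 + (4*A*B - m^2)" by algebra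
  also have "\<dots> \<ge> 0" using assms by simp
  finally show ?thesis using assms(1) by (simp add: zero_le_mult_iff)
qed

lemma riccati_contra:
  fixes U U1 U2 p q :: "real \<Rightarrow> real" and a c z1 \<eta> :: real
  assumes a: "a > 0" and c: "c < 2 * sqrt a"
    and pos: "\<And>x. U x > 0"
    and d1: "\<And>x. (U has_real_derivative U1 x) (at x)"
    and d2: "\<And>x. (U1 has_real_derivative U2 x) (at x)"
    and ode: "\<And>x. U2 x = - p x * U1 x - q x * U x"
    and bnd: "\<And>x. x \<ge> z1 \<Longrightarrow> \<bar>p x - c\<bar> \<le> \<eta> \<and> \<bar>q x - a\<bar> \<le> \<eta>"
    and eta: "\<eta> = (4*a - (max c 0)^2)/(12*(1+a))"
    and lim: "(U \<longlongrightarrow> 0) at_top"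
  shows False
proof -
  define m where "m = max c 0"
  define \<delta>0 where "\<delta>0 = (4*a - m^2)/(4*(1+a))"
  have m0: "m \<ge> 0" "c \<le> m" unfolding m_def by auto
  have "m < 2 * sqrt a" using c a unfolding m_def by auto
  then have "m^2 < (2 * sqrt a)^2" using m0 by (intro power_strict_mono) auto
  then have mq: "m^2 < 4*a" using a by (simp add: power_mult_distrib)
  have d0pos: "\<delta>0 > 0" unfolding \<delta>0_def using mq a by simp
  have d0le: "\<delta>0 \<le> a/(1+a)"
  proof -
    have "0 \<le> m^2*(1+a)" using a by simp
    then have "(4*a - m^2)*(1+a) \<le> a*(4+4*a)" by (simp add: algebra_simps)
    then show ?thesis unfolding \<delta>0_def using a by (simp add: divide_simps)
  qed
  have "a/(1+a) < 1" using a by simp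
  then have d0lt1: "\<delta>0 < 1" using d0le by linarith
  have "a/(1+a) < a" using a by (simp add: divide_simps)
  then have d0lta: "\<delta>0 < a" using d0le by linarith
  have etad: "\<eta> = \<delta>0/3" unfolding eta \<delta>0_def m_def by simp
  have Q: "R^2 + c*R + a \<ge> \<delta>0*(1+R^2)" if R: "R \<le> 0" for R
  proof -
    have "c*R \<ge> m*R" using R m0 by (simp add: mult_right_mono_neg)
    moreover have "(1-\<delta>0)*R^2 + m*R + (a-\<delta>0) \<ge> 0"
    proof (rule quad_nonneg)
      show "1 - \<delta>0 > 0" using d0lt1 by simp
      have "4*(1-\<delta>0)*(a-\<delta>0) = 4*a - 4*\<delta>0*(1+a) + 4*\<delta>0^2" by algebra
      moreover have "4*\<delta>0*(1+a) = 4*a - m^2" unfolding \<delta>0_def using a by (simp add: field_simps)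
      ultimately show "m^2 \<le> 4*(1-\<delta>0)*(a-\<delta>0)" by simp
    qed
    ultimately show ?thesis by (simp add: algebra_simps)
  qed
  define \<delta> where "\<delta> = \<delta>0/2"
  have dpos: "\<delta> > 0" unfolding \<delta>_def using d0pos by simp
  have Qp: "R^2 + p x*R + q x \<ge> \<delta>*(1+R^2)" if R: "R \<le> 0" and x: "x \<ge> z1" for R x
  proof -
    have b: "\<bar>p x - c\<bar> \<le> \<eta>" "\<bar>q x - a\<bar> \<le> \<eta>" using bnd[OF x] by auto
    have "\<bar>(p x - c)*R\<bar> \<le> \<eta> * \<bar>R\<bar>" unfolding abs_mult using b by (intro mult_right_mono) auto
    then have 1: "p x * R \<ge> c*R - \<eta>*\<bar>R\<bar>" by (simp add: algebra_simps abs_le_iff)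
    have 2: "q x \<ge> a - \<eta>" using b by simp
    have "0 \<le> (\<bar>R\<bar> - 1)^2" by simp
    moreover have "(\<bar>R\<bar> - 1)^2 = R^2 - 2*\<bar>R\<bar> + 1" by (simp add: power2_eq_square algebra_simps)
    ultimately have "2*\<bar>R\<bar> \<le> 1 + R^2" by simp
    moreover have "3/2*(1+R^2) = 3/2 + 3/2*R^2" by simp
    ultimately have 3: "\<bar>R\<bar> + 1 \<le> 3/2*(1+R^2)" using zero_le_power2[of R] by linarith
    have 4: "\<eta>*(\<bar>R\<bar>+1) \<le> \<eta>*(3/2*(1+R^2))"
      using 3 d0pos etad by (intro mult_left_mono) auto
    show ?thesis using Q[OF R] 1 2 4 unfolding \<delta>_def etad by (simp add: algebra_simps)
  qed
  define R where "R x = U1 x / U x" for x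
  define R' where "R' x = (U2 x * U x - U1 x * U1 x) / (U x * U x)" for x
  have dR: "(R has_real_derivative R' x) (at x)" for x
    unfolding R_def R'_def using pos[of x]
    by (auto intro!: derivative_eq_intros d1 d2 simp: power2_eq_square)
  have R'eq: "R' x = - ((R x)^2 + p x * R x + q x)" for x
    using pos[of x] unfolding R'_def R_def ode
    by (simp add: field_simps power2_eq_square)
  have contR: "continuous_on UNIV R"
    using dR by (meson DERIV_isCont continuous_at_imp_continuous_on)
  obtain z2 where z2: "z2 \<ge> z1" "U1 z2 < 0"
  proof (rule ccontr)
    assume "\<not> thesis"
    then have nn: "\<And>z. z \<ge> z1 \<Longrightarrow> U1 z \<ge> 0" using that by force
    have mono: "U z1 \<le> U z" if "z \<ge> z1" for z
    proof (rule DERIV_nonneg_imp_increasing_open[OF that])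
      show "\<And>x. z1 < x \<Longrightarrow> x < z \<Longrightarrow> \<exists>y. DERIV U x :> y \<and> 0 \<le> y"
        using d1 nn by force
      show "continuous_on {z1..z} U" using d1
        by (meson DERIV_isCont continuous_at_imp_continuous_on)
    qed
    have "\<forall>\<^sub>F x in at_top. U x < U z1"
      using lim pos[of z1] by (simp add: order_tendsto_iff)
    then obtain N where "\<And>x. x \<ge> N \<Longrightarrow> U x < U z1" by (auto simp: eventually_at_top_linorder)
    then show False using mono[of "max N z1"] by (metis max.cobounded1 max.cobounded2 not_le)
  qed
  have Rz2: "R z2 < 0" unfolding R_def using z2 pos[of z2] by (simp add: divide_neg_pos)
  have Rdec: "R' x < 0" if "x \<ge> z1" "R x = 0" for x
  proof -
    have "q x \<ge> a - \<eta>" using bnd[OF that(1)] by (simp add: abs_le_iff)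
    moreover have "\<eta> < a" using etad d0lta d0pos by simp
    ultimately show ?thesis using R'eq[of x] that by simp
  qed
  have neg: "R z < 0" if z: "z \<ge> z2" for z
  proof (rule ccontr)
    assume "\<not> R z < 0"
    then have Rz: "R z \<ge> 0" by simp
    define T where "T = {y. z2 \<le> y \<and> y \<le> z \<and> R y = 0}"
    obtain y0 where "z2 \<le> y0" "y0 \<le> z" "R y0 = 0"
      using IVT'[of R z2 0 z] Rz Rz2 z continuous_on_subset[OF contR] by force
    then have Tne: "T \<noteq> {}" unfolding T_def by blast
    have Tb: "bdd_below T" unfolding T_def by (rule bdd_belowI[of _ z2]) auto
    have Tc: "closed T"
    proof -
      have "T = {z2..z} \<inter> R -` {0}" unfolding T_def by auto
      moreover have "closed (R -` {0})" using contR
        by (simp add: continuous_on_closed_vimage)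
      ultimately show ?thesis by auto
    qed
    define z3 where "z3 = Inf T"
    have z3T: "z3 \<in> T" unfolding z3_def using closed_contains_Inf[OF Tne Tb Tc] .
    then have z3: "z2 \<le> z3" "z3 \<le> z" "R z3 = 0" unfolding T_def by auto
    have z23: "z2 < z3" using z3 Rz2 by (metis order_le_less less_irrefl)
    have below: "R y < 0" if yy: "z2 \<le> y" "y < z3" for y
    proof (rule ccontr)
      assume "\<not> R y < 0"
      then obtain w where w: "z2 \<le> w" "w \<le> y" "R w = 0"
        using IVT'[of R z2 0 y] Rz2 yy continuous_on_subset[OF contR] by force
      then have "w \<in> T" unfolding T_def using yy z3 by auto
      then have "z3 \<le> w" unfolding z3_def using Tb by (simp add: cInf_lower)
      then show False using w yy by simp
    qed
    obtain d where d: "d > 0" "\<And>h. h > 0 \<Longrightarrow> h < d \<Longrightarrow> R z3 < R (z3 - h)"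
      using DERIV_neg_dec_left[OF dR Rdec[of z3]] z3 z2 by auto
    define h where "h = min (d/2) ((z3 - z2)/2)"
    have "h > 0" "h < d" unfolding h_def using d z23 by auto
    then have g1: "R z3 < R (z3 - h)" using d by blast
    have "h \<le> (z3 - z2)/2" unfolding h_def by (rule min.cobounded2)
    then have "R (z3 - h) < 0" using below[of "z3 - h"] \<open>h > 0\<close> z23 by auto
    with g1 show False using z3 by simp
  qed
  define H where "H x = arctan (R x) + \<delta> * x" for x
  define H' where "H' x = inverse (1 + (R x)^2) * R' x + \<delta>" for x
  have dH: "(H has_real_derivative H' x) (at x)" for x
    unfolding H_def H'_def by (auto intro!: derivative_eq_intros dR)
  have H'np: "H' x \<le> 0" if "x \<ge> z2" for x
  proof -
    have "(R x)^2 + p x * R x + q x \<ge> \<delta>*(1+(R x)^2)"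
      using Qp[of "R x" x] neg[OF that] that z2 by auto
    then have "R' x \<le> - \<delta>*(1+(R x)^2)" using R'eq[of x] by simp
    moreover have "1 + (R x)^2 > 0" by (simp add: add_pos_nonneg)
    ultimately have "R' x / (1 + (R x)^2) \<le> - \<delta>" by (simp add: divide_simps)
    then show ?thesis unfolding H'_def by (simp add: divide_inverse mult.commute)
  qed
  define zz where "zz = z2 + 4/\<delta>"
  have zz: "z2 < zz" unfolding zz_def using dpos by simp
  obtain w where w: "z2 < w" "w < zz" "H zz - H z2 = (zz - z2) * H' w"
    using MVT2[OF zz, of H H'] dH by auto
  have "(zz - z2) * H' w \<le> 0" using H'np[of w] w zz by (simp add: mult_nonneg_nonpos)
  then have "H zz \<le> H z2" using w by simp
  then have "arctan (R zz) \<le> arctan (R z2) - \<delta> * (zz - z2)" unfolding H_def by (simp add: algebra_simps)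
  also have "\<delta> * (zz - z2) = 4" unfolding zz_def using dpos by simp
  finally have "arctan (R zz) \<le> arctan (R z2) - 4" .
  moreover have "arctan (R z2) < pi/2" by (rule arctan_ubound)
  moreover have "- (pi/2) < arctan (R zz)" by (rule arctan_lbound)
  moreover have "pi < 4" by (rule pi_less_4)
  ultimately show False by linarith
qed


theorem theoremC:
  fixes a b chi1 chi2 lam1 lam2 mu1 mu2 c :: real
  assumes "a > 0" and "b > 0" and "chi1 \<ge> 0" and "chi2 \<ge> 0"
    and "lam1 > 0" and "lam2 > 0" and "mu1 > 0" and "mu2 > 0"
    and "c < 2 * sqrt a"
  shows "\<not> (\<exists>U V1 V2. traveling_wave a b chi1 chi2 lam1 lam2 mu1 mu2 c U V1 V2)"
proof
  note a = \<open>a > 0\<close> and b = \<open>b > 0\<close> and cc = \<open>c < 2 * sqrt a\<close>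
  assume "\<exists>U V1 V2. traveling_wave a b chi1 chi2 lam1 lam2 mu1 mu2 c U V1 V2"
  then obtain U V1 V2 where tw: "traveling_wave a b chi1 chi2 lam1 lam2 mu1 mu2 c U V1 V2"
    by blast
  note tw' = tw[unfolded traveling_wave_def Let_def]
  have nn: "\<And>z. U z \<ge> 0" using tw' by blast
  have "C2_real U" "C2_real V1" "C2_real V2" using tw' by blast+
  then obtain U1 U2 A1 A2 B1 B2 where
    dU1: "\<And>x. (U has_real_derivative U1 x) (at x)" and dU2: "\<And>x. (U1 has_real_derivative U2 x) (at x)"
    and cU2: "continuous_on UNIV U2"
    and dA1: "\<And>x. (V1 has_real_derivative A1 x) (at x)" and dA2: "\<And>x. (A1 has_real_derivative A2 x) (at x)"
    and cA2: "continuous_on UNIV A2"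
    and dB1: "\<And>x. (V2 has_real_derivative B1 x) (at x)" and dB2: "\<And>x. (B1 has_real_derivative B2 x) (at x)"
    and cB2: "continuous_on UNIV B2"
    unfolding C2_real_def by metis
  have pde: "deriv (\<lambda>s. U (x - c * s)) 0 = deriv (deriv U) x
          + deriv (\<lambda>y. U y * deriv (\<lambda>y'. chi2 * V2 y' - chi1 * V1 y') y) x
          + U x * (a - b * U x)" for x
    using tw' by (auto dest!: spec[of _ 0])
  have e1all: "\<forall>t x. 0 = deriv (deriv (\<lambda>x. V1 (x - c * t))) x - lam1 * V1 (x - c * t) + mu1 * U (x - c * t)"
    using tw' by blast
  have e1: "0 = deriv (deriv V1) x - lam1 * V1 x + mu1 * U x" for x
    using e1all[rule_format, of 0 x] by simp
  have e2all: "\<forall>t x. 0 = deriv (deriv (\<lambda>x. V2 (x - c * t))) x - lam2 * V2 (x - c * t) + mu2 * U (x - c * t)"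
    using tw' by blast
  have e2: "0 = deriv (deriv V2) x - lam2 * V2 x + mu2 * U x" for x
    using e2all[rule_format, of 0 x] by simp
  have lims: "(U \<longlongrightarrow> a / b) at_bot" "(V1 \<longlongrightarrow> 0) at_top" "(V2 \<longlongrightarrow> 0) at_top" "(U \<longlongrightarrow> 0) at_top"
    using tw' by blast+
  have dU: "deriv U = U1" "deriv U1 = U2" "deriv V1 = A1" "deriv A1 = A2" "deriv V2 = B1" "deriv B1 = B2"
    using DERIV_imp_deriv dU1 dU2 dA1 dA2 dB1 dB2 by blast+
  define Wp where "Wp x = chi2 * B1 x - chi1 * A1 x" for x
  define Wpp where "Wpp x = chi2 * B2 x - chi1 * A2 x" for x
  have dW: "((\<lambda>y'. chi2 * V2 y' - chi1 * V1 y') has_real_derivative Wp x) (at x)" for x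
    unfolding Wp_def by (auto intro!: derivative_eq_intros dA1 dB1)
  have dWp: "(Wp has_real_derivative Wpp x) (at x)" for x
    unfolding Wp_def Wpp_def by (auto intro!: derivative_eq_intros dA2 dB2)
  have dWfun: "deriv (\<lambda>y'. chi2 * V2 y' - chi1 * V1 y') = Wp"
    using DERIV_imp_deriv dW by blast
  have dprod: "deriv (\<lambda>y. U y * Wp y) x = U1 x * Wp x + U x * Wpp x" for x
    by (rule DERIV_imp_deriv) (auto intro!: derivative_eq_intros dU1 dWp)
  have dt: "deriv (\<lambda>s. U (x - c * s)) 0 = - c * U1 x" for x
  proof (rule DERIV_imp_deriv)
    have "((\<lambda>s. x - c * s) has_real_derivative - c) (at 0)"
      by (auto intro!: derivative_eq_intros)
    from DERIV_chain2[OF dU1 this] show "((\<lambda>s. U (x - c * s)) has_real_derivative - c * U1 x) (at 0)"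
      by (simp add: mult.commute)
  qed
  define p where "p x = c + Wp x" for x
  define q where "q x = Wpp x + a - b * U x" for x
  have ode: "U2 x = - p x * U1 x - q x * U x" for x
    using pde[of x] unfolding dt dU dWfun dprod p_def q_def by (simp add: algebra_simps)
  have A2e: "A2 x = lam1 * V1 x - mu1 * U x" for x using e1[of x] unfolding dU by simp
  have B2e: "B2 x = lam2 * V2 x - mu2 * U x" for x using e2[of x] unfolding dU by simp
  have contU: "continuous_on UNIV U" using dU1 by (meson DERIV_isCont continuous_at_imp_continuous_on)
  have contWp: "continuous_on UNIV Wp" using dWp by (meson DERIV_isCont continuous_at_imp_continuous_on)
  have cp: "continuous_on UNIV p" unfolding p_def by (intro continuous_intros contWp)
  have cq: "continuous_on UNIV q" unfolding q_def Wpp_def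
    by (intro continuous_intros cA2 cB2 contU)
  have pos: "U x > 0" for x
  proof (rule ccontr)
    assume "\<not> U x > 0"
    then have z0: "U x = 0" using nn[of x] by simp
    have zero: "U y = 0" if "y < x" for y
      by (rule zero_backward[OF dU1 dU2 ode cp cq nn z0 that])
    have "\<forall>\<^sub>F y in at_bot. U y > 0"
      using lims(1) a b by (simp add: order_tendsto_iff)
    then obtain N where Np: "\<And>y. y \<le> N \<Longrightarrow> U y > 0" by (auto simp: eventually_at_bot_linorder)
    have "min N (x - 1) < x" "min N (x - 1) \<le> N" by auto
    then show False using zero[of "min N (x - 1)"] Np[of "min N (x - 1)"] by simp
  qed
  define W where "W = (\<lambda>x. chi2 * V2 x - chi1 * V1 x)"
  have W0: "(W \<longlongrightarrow> 0) at_top" unfolding W_def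
    using tendsto_diff[OF tendsto_mult[OF tendsto_const lims(3)] tendsto_mult[OF tendsto_const lims(2)]]
    by simp
  have Wpp_eq: "Wpp = (\<lambda>x. chi2 * (lam2 * V2 x - mu2 * U x) - chi1 * (lam1 * V1 x - mu1 * U x))"
    unfolding Wpp_def A2e B2e by simp
  have Wpp0: "(Wpp \<longlongrightarrow> 0) at_top"
  proof -
    have t1: "((\<lambda>x. lam2 * V2 x - mu2 * U x) \<longlongrightarrow> lam2 * 0 - mu2 * 0) at_top"
      by (intro tendsto_diff tendsto_mult tendsto_const lims)
    have t2: "((\<lambda>x. lam1 * V1 x - mu1 * U x) \<longlongrightarrow> lam1 * 0 - mu1 * 0) at_top"
      by (intro tendsto_diff tendsto_mult tendsto_const lims)
    have "((\<lambda>x. chi2 * (lam2 * V2 x - mu2 * U x) - chi1 * (lam1 * V1 x - mu1 * U x)) \<longlongrightarrow> chi2 * (lam2 * 0 - mu2 * 0) - chi1 * (lam1 * 0 - mu1 * 0)) at_top"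
      by (intro tendsto_diff tendsto_mult tendsto_const t1 t2)
    then show ?thesis unfolding Wpp_eq by simp
  qed
  have Wp0: "(Wp \<longlongrightarrow> 0) at_top"
    by (rule deriv_to_zero[of W Wp Wpp]) (use dW dWp W0 Wpp0 in \<open>auto simp: W_def\<close>)
  have p0: "((\<lambda>x. p x - c) \<longlongrightarrow> 0) at_top" unfolding p_def using Wp0 by simp
  have q0: "((\<lambda>x. q x - a) \<longlongrightarrow> 0) at_top" unfolding q_def
    using tendsto_diff[OF Wpp0 tendsto_mult[OF tendsto_const lims(4), of b]] by simp
  define \<eta> where "\<eta> = (4*a - (max c 0)^2)/(12*(1+a))"
  have "max c 0 < 2 * sqrt a" using cc a by auto
  then have "(max c 0)^2 < (2 * sqrt a)^2" by (intro power_strict_mono) auto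
  then have "(max c 0)^2 < 4*a" using a by (simp add: power_mult_distrib)
  then have etapos: "\<eta> > 0" unfolding \<eta>_def using a by simp
  have "\<forall>\<^sub>F x in at_top. \<bar>p x - c\<bar> < \<eta>"
    using p0[unfolded tendsto_iff dist_real_def, rule_format, OF etapos] by simp
  moreover have "\<forall>\<^sub>F x in at_top. \<bar>q x - a\<bar> < \<eta>"
    using q0[unfolded tendsto_iff dist_real_def, rule_format, OF etapos] by simp
  ultimately have "\<forall>\<^sub>F x in at_top. \<bar>p x - c\<bar> < \<eta> \<and> \<bar>q x - a\<bar> < \<eta>"
    by (rule eventually_conj)
  then obtain z1 where z1: "\<And>x. x \<ge> z1 \<Longrightarrow> \<bar>p x - c\<bar> < \<eta> \<and> \<bar>q x - a\<bar> < \<eta>"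
    by (auto simp: eventually_at_top_linorder)
  have z1': "\<And>x. x \<ge> z1 \<Longrightarrow> \<bar>p x - c\<bar> \<le> \<eta> \<and> \<bar>q x - a\<bar> \<le> \<eta>"
    using z1 by (meson less_imp_le)
  show False
    by (rule riccati_contra[OF a cc pos dU1 dU2 ode z1' \<eta>_def lims(4)])
qed

end
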